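(* Let $\Omega$ be a finite set and let $f_1,\ldots,f_n\in\mathbb{R}^{\Omega}$ be gambles. Let $$\mathcal M=\{p\in\mathbb{R}^{\Omega}: p\cdot f_i\ge 0 \text{ for } i=1,\ldots,n,\ p\cdot 1_\Omega=1\},$$ and assume $\mathcal M$ is a nonempty credal set (a nonempty, closed, convex set of probability mass vectors) and that for each $i$ there is $p\in\mathcal M$ with $p\cdot f_i=0$. For a gamble $h$ write $\underline{E}(h)=\min_{P\in\mathcal M}P\cdot h$. Let $E\in\mathcal M$, let $h$ be a gamble with $E\cdot h=\underline{E}(h)$, and let $I=\{i: E\cdot f_i=0\}$. For $i\in I$ let $f'_i$ be the unique vector such that $f_i-f'_i=c_i1_\Omega$ for some constant $c_i\in\mathbb{R}$ and $f'_i\cdot 1_\Omega=0$. Then there exist $\alpha'_i\ge 0$ for $i\in I$ and $\beta'\in\mathbb{R}$ such that $$h=\sum_{i\in I}\alpha'_i f'_i+\beta' 1_\Omega.$$ Moreover, $$\Big\|\sum_{i\in I}\alpha'_i f'_i\Big\|\le\Big\|\sum_{i\in I}\alpha'_i f'_i+\beta 1_\Omega\Big\|\quad\text{for every }\beta\in\mathbb{R}.$$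
   Context: Gambles are real-valued maps on the finite set $\Omega$, identified with vectors in $\mathbb{R}^{\Omega}$; $f\cdot g=\sum_{x\in\Omega}f(x)g(x)$ is the standard inner product and $\|f\|=\sqrt{f\cdot f}$ the Euclidean norm; $1_\Omega$ is the constant gamble $1$. Linear previsions are identified with probability mass vectors $P$, with $P(f)=P\cdot f$. *)

theory Defs
  imports "HOL-Analysis.Analysis"
begin

definition gdot :: "('w::finite \<Rightarrow> real) \<Rightarrow> ('w \<Rightarrow> real) \<Rightarrow> real" where
  "gdot f g = (\<Sum>x\<in>UNIV. f x * g x)"

definition gnorm :: "('w::finite \<Rightarrow> real) \<Rightarrow> real" where
  "gnorm f = sqrt (gdot f f)"

definition gone :: "'w \<Rightarrow> real" where
  "gone = (\<lambda>_. 1)"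

definition lower_exp :: "('w::finite \<Rightarrow> real) set \<Rightarrow> ('w \<Rightarrow> real) \<Rightarrow> real" where
  "lower_exp M h = (INF P\<in>M. gdot P h)"

definition centered :: "('w::finite \<Rightarrow> real) \<Rightarrow> ('w \<Rightarrow> real)" where
  "centered f = (THE g. (\<exists>c::real. \<forall>x. f x - g x = c) \<and> gdot g gone = 0)"

end

theory Submission
  imports Defs
begin

lemma gdot_inner: "gdot p g = inner (vec_lambda p) (vec_lambda g :: real^'w::finite)"
  by (simp add: gdot_def inner_vec_def)

lemma gdot_add_scale: "gdot (\<lambda>x. p x + t * q x) g = gdot p g + t * gdot q g"
  by (simp add: gdot_def algebra_simps sum.distrib sum_distrib_left)

lemma centered_eq:
  "centered (f::'w::finite \<Rightarrow> real) = (\<lambda>x. f x - gdot f gone / real CARD('w))"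
  unfolding centered_def
proof (rule the_equality)
  have "gdot (\<lambda>x. f x - gdot f gone / real CARD('w)) gone
        = gdot f gone - real CARD('w) * (gdot f gone / real CARD('w))"
    by (simp add: gdot_def gone_def sum_subtractf)
  also have "\<dots> = 0" by simp
  finally show "(\<exists>c. \<forall>x. f x - (f x - gdot f gone / real CARD('w)) = c) \<and>
      gdot (\<lambda>x. f x - gdot f gone / real CARD('w)) gone = 0" by auto
next
  fix g assume "(\<exists>c. \<forall>x. f x - g x = c) \<and> gdot g gone = 0"
  then obtain c where c: "\<And>x. f x - g x = c" and g0: "gdot g gone = 0" by blast
  have gg: "g = (\<lambda>x. f x - c)" using c by (auto simp: algebra_simps)
  have "0 = gdot f gone - real CARD('w) * c"
    using g0 by (simp add: gg gdot_def gone_def sum_subtractf)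
  then have "c = gdot f gone / real CARD('w)" by (simp add: field_simps)
  then show "g = (\<lambda>x. f x - gdot f gone / real CARD('w))" using gg by simp
qed

theorem corollary3:
  fixes f :: "nat \<Rightarrow> ('w::finite \<Rightarrow> real)" and n :: nat
    and M :: "('w \<Rightarrow> real) set" and E h :: "'w \<Rightarrow> real" and I :: "nat set"
  assumes M_def: "M = {p. (\<forall>i\<in>{1..n}. gdot p (f i) \<ge> 0) \<and> gdot p gone = 1}"
    and M_ne: "M \<noteq> {}"
    and M_prob: "\<forall>p\<in>M. \<forall>x. p x \<ge> 0"
    and tight: "\<forall>i\<in>{1..n}. \<exists>p\<in>M. gdot p (f i) = 0"
    and E_in: "E \<in> M"
    and E_min: "gdot E h = lower_exp M h"
    and I_def: "I = {i\<in>{1..n}. gdot E (f i) = 0}"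
  shows "\<exists>\<alpha>::nat \<Rightarrow> real. (\<forall>i\<in>I. \<alpha> i \<ge> 0) \<and>
           (\<exists>\<beta>'::real. h = (\<lambda>x. (\<Sum>i\<in>I. \<alpha> i * centered (f i) x) + \<beta>' * gone x)) \<and>
           (\<forall>\<beta>::real. gnorm (\<lambda>x. \<Sum>i\<in>I. \<alpha> i * centered (f i) x)
                 \<le> gnorm (\<lambda>x. (\<Sum>i\<in>I. \<alpha> i * centered (f i) x) + \<beta> * gone x))"
proof -
  have finI: "finite I" using I_def by auto
  have bdd: "bdd_below ((\<lambda>P. gdot P h) ` M)"
  proof (rule bdd_belowI2)
    fix P assume P: "P \<in> M"
    have nn: "\<And>x. 0 \<le> P x" using P M_prob by auto
    have s1: "(\<Sum>x\<in>UNIV. P x) = 1" using P by (simp add: M_def gdot_def gone_def)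
    have le1: "P x \<le> 1" for x
      using member_le_sum[of x UNIV P] nn s1 by auto
    have "P x * h x \<ge> - \<bar>h x\<bar>" for x
    proof -
      have "- \<bar>h x\<bar> \<le> h x" by simp
      from mult_left_mono[OF this nn[of x]]
      have "P x * h x \<ge> - (P x * \<bar>h x\<bar>)" by simp
      moreover have "P x * \<bar>h x\<bar> \<le> \<bar>h x\<bar>" using le1[of x] nn[of x]
        by (simp add: mult_left_le_one_le)
      ultimately show ?thesis by linarith
    qed
    then have "(\<Sum>x\<in>UNIV. - \<bar>h x\<bar>) \<le> gdot P h"
      unfolding gdot_def by (rule sum_mono)
    then show "- (\<Sum>x\<in>UNIV. \<bar>h x\<bar>) \<le> gdot P h" by (simp add: sum_negf)
  qed
  have Emin: "\<And>P. P \<in> M \<Longrightarrow> gdot E h \<le> gdot P h"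
  proof -
    fix P assume "P \<in> M"
    have "lower_exp M h \<le> gdot P h" unfolding lower_exp_def
      by (rule cINF_lower[OF bdd \<open>P \<in> M\<close>])
    then show "gdot E h \<le> gdot P h" using E_min by simp
  qed
  define C :: "(real^'w) set" where
    "C = {vec_lambda (\<lambda>x. (\<Sum>i\<in>I. \<alpha> i * f i x) + \<beta>) | \<alpha> \<beta>. (\<forall>i\<in>I. 0 \<le> \<alpha> i)}"
  define S :: "(real^'w) set" where
    "S = (\<lambda>i. vec_lambda (f i)) ` I \<union> {vec_lambda gone, - vec_lambda gone}"
  have finS: "finite S" using finI by (simp add: S_def)
  have Cmem: "vec_lambda (\<lambda>x. (\<Sum>i\<in>I. \<alpha> i * f i x) + \<beta>) \<in> C"
    if "\<forall>i\<in>I. 0 \<le> \<alpha> i" for \<alpha> \<beta>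
    unfolding C_def using that by blast
  have Cscale: "c *\<^sub>R y \<in> C" if "y \<in> C" "0 \<le> c" for y c
  proof -
    from that obtain \<alpha> \<beta> where y: "y = vec_lambda (\<lambda>x. (\<Sum>i\<in>I. \<alpha> i * f i x) + \<beta>)"
      and a: "\<forall>i\<in>I. 0 \<le> \<alpha> i" by (auto simp: C_def)
    have "c *\<^sub>R y = vec_lambda (\<lambda>x. (\<Sum>i\<in>I. (c * \<alpha> i) * f i x) + c * \<beta>)"
      by (simp add: y vec_eq_iff sum_distrib_left algebra_simps)
    moreover have "\<forall>i\<in>I. 0 \<le> c * \<alpha> i" using a that(2) by simp
    ultimately show ?thesis using Cmem[of "\<lambda>i. c * \<alpha> i"] by simp
  qed
  have Cadd: "y + z \<in> C" if "y \<in> C" "z \<in> C" for y z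
  proof -
    from that obtain \<alpha> \<beta> \<alpha>' \<beta>' where y: "y = vec_lambda (\<lambda>x. (\<Sum>i\<in>I. \<alpha> i * f i x) + \<beta>)"
      and a: "\<forall>i\<in>I. 0 \<le> \<alpha> i"
      and z: "z = vec_lambda (\<lambda>x. (\<Sum>i\<in>I. \<alpha>' i * f i x) + \<beta>')"
      and a': "\<forall>i\<in>I. 0 \<le> \<alpha>' i" by (auto simp: C_def)
    have "y + z = vec_lambda (\<lambda>x. (\<Sum>i\<in>I. (\<alpha> i + \<alpha>' i) * f i x) + (\<beta> + \<beta>'))"
      by (simp add: y z vec_eq_iff sum.distrib algebra_simps)
    moreover have "\<forall>i\<in>I. 0 \<le> \<alpha> i + \<alpha>' i" using a a' by simp
    ultimately show ?thesis using Cmem[of "\<lambda>i. \<alpha> i + \<alpha>' i"] by simp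
  qed
  have C0: "0 \<in> C"
  proof -
    have "(0::real^'w) = vec_lambda (\<lambda>x. (\<Sum>i\<in>I. 0 * f i x) + 0)" by (simp add: vec_eq_iff)
    then show ?thesis using Cmem[of "\<lambda>i. 0" 0] by simp
  qed
  have Cone: "vec_lambda (\<lambda>x. c) \<in> C" for c
  proof -
    have "(vec_lambda (\<lambda>x. c)::real^'w) = vec_lambda (\<lambda>x. (\<Sum>i\<in>I. 0 * f i x) + c)" by simp
    then show ?thesis using Cmem[of "\<lambda>i. 0" c] by simp
  qed
  have Cf: "vec_lambda (f j) \<in> C" if "j \<in> I" for j
  proof -
    have "(\<Sum>i\<in>I. (if i = j then 1 else 0) * f i x) = f j x" for x
    proof -
      have "(\<Sum>i\<in>I. (if i = j then 1 else 0) * f i x) = (\<Sum>i\<in>I. if j = i then f i x else 0)"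
        by (rule sum.cong) auto
      also have "\<dots> = f j x" using that finI by (simp add: sum.delta)
      finally show ?thesis .
    qed
    then have "vec_lambda (f j) = vec_lambda (\<lambda>x. (\<Sum>i\<in>I. (if i = j then 1 else 0) * f i x) + 0)"
      by simp
    moreover have "\<forall>i\<in>I. 0 \<le> (if i = j then 1 else (0::real))" by simp
    ultimately show ?thesis using Cmem[of "\<lambda>i. if i = j then 1 else 0" 0] by simp
  qed
  have ccC: "convex_cone C"
    unfolding convex_cone_iff using C0 Cadd Cscale by blast
  have SC: "S \<subseteq> C"
  proof -
    have "vec_lambda gone \<in> C" using Cone[of 1] by (simp add: gone_def)
    moreover have "- vec_lambda gone \<in> C"
    proof -
      have "- vec_lambda gone = (vec_lambda (\<lambda>x. -1) :: real^'w)"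
        by (simp add: gone_def vec_eq_iff)
      then show ?thesis using Cone[of "-1"] by simp
    qed
    ultimately show ?thesis using Cf by (auto simp: S_def)
  qed
  have Csub: "C \<subseteq> convex_cone hull S"
  proof
    fix y assume "y \<in> C"
    then obtain \<alpha> \<beta> where y: "y = vec_lambda (\<lambda>x. (\<Sum>i\<in>I. \<alpha> i * f i x) + \<beta>)"
      and a: "\<forall>i\<in>I. 0 \<le> \<alpha> i" by (auto simp: C_def)
    have 1: "(\<Sum>i\<in>J. \<alpha> i *\<^sub>R vec_lambda (f i)) \<in> convex_cone hull S" if "J \<subseteq> I" for J
      using finite_subset[OF that finI] that
    proof (induction J rule: finite_induct)
      case empty then show ?case by (simp add: convex_cone_hull_contains_0)
    next
      case (insert j J)
      have "vec_lambda (f j) \<in> convex_cone hull S"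
        using insert.prems by (auto simp: S_def intro: hull_inc)
      then have "\<alpha> j *\<^sub>R vec_lambda (f j) \<in> convex_cone hull S"
        using a insert.prems by (auto intro: convex_cone_hull_mul)
      then show ?case using insert by (simp add: convex_cone_hull_add)
    qed
    have 2: "vec_lambda (\<lambda>x. \<beta>) \<in> convex_cone hull S"
    proof (cases "0 \<le> \<beta>")
      case True
      have "vec_lambda gone \<in> convex_cone hull S" by (auto simp: S_def intro: hull_inc)
      then have "\<beta> *\<^sub>R vec_lambda gone \<in> convex_cone hull S"
        using True by (rule convex_cone_hull_mul)
      moreover have "\<beta> *\<^sub>R vec_lambda gone = (vec_lambda (\<lambda>x. \<beta>) :: real^'w)"
        by (simp add: gone_def vec_eq_iff)
      ultimately show ?thesis by simp
    next
      case False
      have "- vec_lambda gone \<in> convex_cone hull S" by (auto simp: S_def intro: hull_inc)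
      then have "(- \<beta>) *\<^sub>R (- vec_lambda gone) \<in> convex_cone hull S"
        using False by (intro convex_cone_hull_mul) auto
      moreover have "(- \<beta>) *\<^sub>R (- vec_lambda gone) = (vec_lambda (\<lambda>x. \<beta>) :: real^'w)"
        by (simp add: gone_def vec_eq_iff)
      ultimately show ?thesis by simp
    qed
    have "y = (\<Sum>i\<in>I. \<alpha> i *\<^sub>R vec_lambda (f i)) + vec_lambda (\<lambda>x. \<beta>)"
      by (simp add: y vec_eq_iff sum_component)
    then show "y \<in> convex_cone hull S" using 1[OF order_refl] 2
      by (simp add: convex_cone_hull_add)
  qed
  have Ceq: "C = convex_cone hull S"
  proof -
    have "convex_cone hull S \<subseteq> C" by (rule hull_minimal[where S=convex_cone, OF SC ccC])
    then show ?thesis using Csub by blast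
  qed
  have closedC: "closed C" using Ceq finS by (simp add: closed_convex_cone_hull)
  have convC: "convex C" using Ceq by (simp add: convex_convex_cone_hull)
  have hC: "vec_lambda h \<in> C"
  proof (rule ccontr)
    assume nh: "vec_lambda h \<notin> C"
    obtain a b where ab: "inner a (vec_lambda h) < b" "\<forall>x\<in>C. b < inner a x"
      using separating_hyperplane_closed_point[OF convC closedC nh] by blast
    have b0: "b < 0" using ab(2) C0 by auto
    have apos: "0 \<le> inner a y" if "y \<in> C" for y
    proof (rule ccontr)
      assume "\<not> 0 \<le> inner a y"
      then have neg: "inner a y < 0" by simp
      have "(b / inner a y) *\<^sub>R y \<in> C" using Cscale[OF that] neg b0
        by (simp add: divide_nonpos_neg less_imp_le)
      then have "b < inner a ((b / inner a y) *\<^sub>R y)" using ab(2) by blast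
      then show False using neg by simp
    qed
    define A where "A = (\<lambda>x. a $ x)"
    have Ag: "gdot A g = inner a (vec_lambda g)" for g
      by (simp add: gdot_inner A_def)
    have Af: "i \<in> I \<Longrightarrow> 0 \<le> gdot A (f i)" for i using apos Cf by (simp add: Ag)
    have A1: "gdot A gone = 0"
    proof -
      have "0 \<le> gdot A gone" using apos[OF Cone[of 1]] by (simp add: Ag gone_def)
      moreover have "0 \<le> - gdot A gone"
      proof -
        have "- vec_lambda gone = (vec_lambda (\<lambda>x. -1) :: real^'w)"
          by (simp add: gone_def vec_eq_iff)
        then have "0 \<le> inner a (- vec_lambda gone)" using apos[OF Cone[of "-1"]] by simp
        then show ?thesis by (simp add: Ag)
      qed
      ultimately show ?thesis by simp
    qed
    have Ah: "gdot A h < 0" using ab(1) b0 by (simp add: Ag)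
    define J where "J = {1..n} - I"
    define t where "t = Min (insert 1 ((\<lambda>i. gdot E (f i) / (\<bar>gdot A (f i)\<bar> + 1)) ` J))"
    have finJ: "finite J" by (simp add: J_def)
    have EJ: "i \<in> J \<Longrightarrow> 0 < gdot E (f i)" for i
      using E_in by (auto simp: J_def I_def M_def less_le)
    have tpos: "0 < t" unfolding t_def using finJ EJ
      by (subst Min_gr_iff) (auto intro!: divide_pos_pos)
    have tle: "t \<le> gdot E (f i) / (\<bar>gdot A (f i)\<bar> + 1)" if "i \<in> J" for i
      unfolding t_def using finJ that by (intro Min_le) auto
    define P where "P = (\<lambda>x. E x + t * A x)"
    have "P \<in> M"
    proof -
      have "gdot P gone = 1" using E_in A1 by (simp add: P_def gdot_add_scale M_def)
      moreover have "0 \<le> gdot P (f i)" if "i \<in> {1..n}" for i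
      proof (cases "i \<in> I")
        case True
        then show ?thesis using Af[OF True] tpos E_in
          by (simp add: P_def gdot_add_scale I_def)
      next
        case False
        then have iJ: "i \<in> J" using that by (simp add: J_def)
        have "t * (\<bar>gdot A (f i)\<bar> + 1) \<le> gdot E (f i)"
          using tle[OF iJ] by (simp add: pos_le_divide_eq add_pos_nonneg)
        moreover have "- (t * \<bar>gdot A (f i)\<bar>) \<le> t * gdot A (f i)"
        proof -
          have "- \<bar>gdot A (f i)\<bar> \<le> gdot A (f i)" by simp
          from mult_left_mono[OF this less_imp_le[OF tpos]] show ?thesis by simp
        qed
        ultimately show ?thesis using tpos by (simp add: P_def gdot_add_scale algebra_simps)
      qed
      ultimately show ?thesis by (simp add: M_def)
    qed
    then have "gdot E h \<le> gdot P h" by (rule Emin)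
    moreover have "gdot P h < gdot E h" using Ah tpos
      by (simp add: P_def gdot_add_scale mult_pos_neg)
    ultimately show False by simp
  qed
  then obtain \<alpha> \<beta> where hv: "vec_lambda h = vec_lambda (\<lambda>x. (\<Sum>i\<in>I. \<alpha> i * f i x) + \<beta>)"
      and a: "\<forall>i\<in>I. 0 \<le> \<alpha> i" by (auto simp: C_def)
  have hh: "h x = (\<Sum>i\<in>I. \<alpha> i * f i x) + \<beta>" for x
    using hv by (simp add: vec_eq_iff)
  define c where "c i = gdot (f i) gone / real CARD('w)" for i
  define g where "g = (\<lambda>x. \<Sum>i\<in>I. \<alpha> i * centered (f i) x)"
  have cent: "centered (f i) x = f i x - c i" for i x by (simp add: centered_eq c_def)
  have rep: "h = (\<lambda>x. g x + (\<beta> + (\<Sum>i\<in>I. \<alpha> i * c i)) * gone x)"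
    by (rule ext) (simp add: hh g_def cent gone_def algebra_simps sum_subtractf sum.distrib)
  have cg: "gdot (centered (f i)) gone = 0" for i
  proof -
    have "gdot (centered (f i)) gone = gdot (f i) gone - real CARD('w) * c i"
      by (simp add: cent gdot_def gone_def sum_subtractf)
    then show ?thesis by (simp add: c_def)
  qed
  have g1: "gdot g gone = 0"
  proof -
    have "gdot g gone = (\<Sum>x\<in>UNIV. \<Sum>i\<in>I. \<alpha> i * centered (f i) x)"
      by (simp add: g_def gdot_def gone_def)
    also have "\<dots> = (\<Sum>i\<in>I. \<Sum>x\<in>UNIV. \<alpha> i * centered (f i) x)"
      by (rule sum.swap)
    also have "\<dots> = (\<Sum>i\<in>I. \<alpha> i * gdot (centered (f i)) gone)"
      by (simp add: gdot_def gone_def sum_distrib_left)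
    finally have "gdot g gone = (\<Sum>i\<in>I. \<alpha> i * gdot (centered (f i)) gone)" .
    then show ?thesis by (simp add: cg)
  qed
  have nrm: "gnorm g \<le> gnorm (\<lambda>x. g x + \<beta>' * gone x)" for \<beta>'
  proof -
    have "gdot (\<lambda>x. g x + \<beta>' * gone x) (\<lambda>x. g x + \<beta>' * gone x)
        = gdot g g + 2 * \<beta>' * gdot g gone + \<beta>'^2 * real CARD('w)"
      by (simp add: gdot_def gone_def algebra_simps power2_eq_square sum.distrib sum_distrib_left sum_distrib_right)
    then have "gdot g g \<le> gdot (\<lambda>x. g x + \<beta>' * gone x) (\<lambda>x. g x + \<beta>' * gone x)"
      using g1 by simp
    then show ?thesis by (simp add: gnorm_def)
  qed
  show ?thesis
    using a rep nrm unfolding g_def by blast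
qed

end
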